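(* Let $H, N, d_h$ be positive integers and $d = H d_h$. Fix a layer $l$ and, for each head $h \in \{1,\dots,H\}$, let $q_h \in \mathbb{R}^{1\times d_h}$, $K_{l,h} \in \mathbb{R}^{N\times d_h}$ and $V_{l,h}\in\mathbb{R}^{N\times d_h}$. Let $W_l^O \in \mathbb{R}^{d\times d}$. Define the attention weights $A^N_{l,h} = \mathrm{Softmax}\!\left(q_h K_{l,h}^T/\sqrt{d_h}\right)\in\mathbb{R}^{1\times N}$. For each $h$ let $\mathcal{I}_{l,h}\in\{0,1\}^N$ be a mask with $\mathcal{I}_{l,h}[i]=1$ for at least one $i$, and define the masked attention weights $$\hat{A}^N_{l,h} = \frac{A^N_{l,h}\odot \mathcal{I}_{l,h}}{\|A^N_{l,h}\odot \mathcal{I}_{l,h}\|_1},$$ where $\odot$ is the entrywise product. Let $$y^N_l = \mathrm{Cat}_{h\in[H]}\big(A^N_{l,h}V_{l,h}\big)\,W_l^O,\qquad \hat{y}^N_l = \mathrm{Cat}_{h\in[H]}\big(\hat{A}^N_{l,h}V_{l,h}\big)\,W_l^O,$$ where $\mathrm{Cat}$ concatenates the $H$ row vectors of length $d_h$ into a row vector of length $d$. Then $$\|y^N_l-\hat{y}^N_l\|_1 \le 2\hat{C}\sum_{h\in[H]}\sum_{i\in[N]} A^N_{l,h}[i]\,\bar{V}_{l,h}\,\big(1-\mathcal{I}_{l,h}[i]\big),$$ where $\hat{C} = \|(W_l^O)^T\|_1$ is the induced matrix $1$-norm of $(W_l^O)^T$ (the largest absolute column sum of $(W_l^O)^T$),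 and $\bar{V}_{l,h} = \max_{k\in[N]}\|V_{l,h}[k]\|_1$, with $V_{l,h}[k]$ the $k$-th row of $V_{l,h}$.
   Context: This models the attention output of one Transformer layer at decoding step $N$ with $H$ heads, before and after evicting key–value cache entries: $\mathcal{I}_{l,h}[i]=1$ means the $i$-th cached key/value of head $h$ is retained and $0$ means it is evicted; evicting entries is equivalent to setting the corresponding pre-softmax logits to $-\infty$, which yields the renormalized weights $\hat{A}^N_{l,h}$. Vector norms $\|\cdot\|_1$ are the usual $\ell_1$ norms; $[N]=\{1,\dots,N\}$. *)

theory Defs
  imports "HOL-Analysis.Analysis"
begin

text \<open>Conventions: all indices are 0-based natural numbers with explicit bounds.
  Head h < H, cache position i < N, head coordinate j < dh, model coordinate c < H*dh.
  q h j: query of head h; K h i j, V h i j: i-th cached key/value row of head h;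
  W c c': output projection W^O (d x d); Imask h i \<in> {0,1}: retention mask.\<close>

definition softmax_attn :: "nat \<Rightarrow> nat \<Rightarrow> (nat \<Rightarrow> nat \<Rightarrow> real) \<Rightarrow> (nat \<Rightarrow> nat \<Rightarrow> nat \<Rightarrow> real)
    \<Rightarrow> nat \<Rightarrow> nat \<Rightarrow> real" where
  "softmax_attn N dh q K h i =
     exp ((\<Sum>j<dh. q h j * K h i j) / sqrt (real dh)) /
     (\<Sum>k<N. exp ((\<Sum>j<dh. q h j * K h k j) / sqrt (real dh)))"

definition masked_attn :: "nat \<Rightarrow> (nat \<Rightarrow> nat \<Rightarrow> real) \<Rightarrow> (nat \<Rightarrow> nat \<Rightarrow> real)
    \<Rightarrow> nat \<Rightarrow> nat \<Rightarrow> real" where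
  "masked_attn N A Imask h i =
     (A h i * Imask h i) / (\<Sum>k<N. \<bar>A h k * Imask h k\<bar>)"

text \<open>Row vector Cat_h (A_h V_h): coordinate c = h*dh + j.\<close>
definition cat_heads :: "nat \<Rightarrow> nat \<Rightarrow> (nat \<Rightarrow> nat \<Rightarrow> real) \<Rightarrow> (nat \<Rightarrow> nat \<Rightarrow> nat \<Rightarrow> real)
    \<Rightarrow> nat \<Rightarrow> real" where
  "cat_heads N dh A V c = (\<Sum>i<N. A (c div dh) i * V (c div dh) i (c mod dh))"

definition attn_output :: "nat \<Rightarrow> nat \<Rightarrow> nat \<Rightarrow> (nat \<Rightarrow> nat \<Rightarrow> real) \<Rightarrow> (nat \<Rightarrow> nat \<Rightarrow> nat \<Rightarrow> real)
    \<Rightarrow> (nat \<Rightarrow> nat \<Rightarrow> real) \<Rightarrow> nat \<Rightarrow> real" where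
  "attn_output H N dh A V W c' = (\<Sum>c<H*dh. cat_heads N dh A V c * W c c')"

text \<open>Induced 1-norm of W^T: max absolute column sum of W^T = max absolute row sum of W.\<close>
definition norm1_transpose :: "nat \<Rightarrow> (nat \<Rightarrow> nat \<Rightarrow> real) \<Rightarrow> real" where
  "norm1_transpose d W = Max ((\<lambda>c. \<Sum>c'<d. \<bar>W c c'\<bar>) ` {..<d})"

definition Vbar :: "nat \<Rightarrow> nat \<Rightarrow> (nat \<Rightarrow> nat \<Rightarrow> nat \<Rightarrow> real) \<Rightarrow> nat \<Rightarrow> real" where
  "Vbar N dh V h = Max ((\<lambda>k. \<Sum>j<dh. \<bar>V h k j\<bar>) ` {..<N})"

end

theory Submission
  imports Defs
begin

lemma sum_div_mod_reindex:
  fixes f :: "nat \<Rightarrow> nat \<Rightarrow> real"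
  assumes "0 < dh"
  shows "(\<Sum>c<H*dh. f (c div dh) (c mod dh)) = (\<Sum>h<H. \<Sum>j<dh. f h j)"
proof (induction H)
  case 0 then show ?case by simp
next
  case (Suc H)
  have split: "{..<Suc H * dh} = {..<H*dh} \<union> {H*dh..<H*dh+dh}" by auto
  have "(\<Sum>c\<in>{H*dh..<H*dh+dh}. f (c div dh) (c mod dh)) = (\<Sum>j<dh. f H j)"
  proof -
    have "(\<Sum>c\<in>{H*dh..<H*dh+dh}. f (c div dh) (c mod dh)) = (\<Sum>j<dh. f ((H*dh+j) div dh) ((H*dh+j) mod dh))"
      by (rule sum.reindex_bij_witness[where j="\<lambda>c. c - H*dh" and i="\<lambda>j. H*dh+j"]) auto
    also have "\<dots> = (\<Sum>j<dh. f H j)"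
      using assms by (intro sum.cong) auto
    finally show ?thesis .
  qed
  then show ?case using Suc split
    by (simp add: sum.union_disjoint ivl_disj_int)
qed

lemma head_l1:
  fixes a I :: "nat \<Rightarrow> real"
  assumes pos: "\<forall>i<N. a i > 0" and s1: "(\<Sum>i<N. a i) = 1"
    and I01: "\<forall>i<N. I i \<in> {0,1}" and ex: "\<exists>i<N. I i = 1"
  shows "(\<Sum>i<N. \<bar>a i - a i * I i / (\<Sum>k<N. \<bar>a k * I k\<bar>)\<bar>) = 2 * (\<Sum>i<N. a i * (1 - I i))"
proof -
  define S where "S = (\<Sum>k<N. a k * I k)"
  have Sabs: "(\<Sum>k<N. \<bar>a k * I k\<bar>) = S"
    unfolding S_def
  proof (intro sum.cong refl)
    fix k assume "k \<in> {..<N}"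
    then have "a k > 0" "I k = 0 \<or> I k = 1" using pos I01 by auto
    then show "\<bar>a k * I k\<bar> = a k * I k" by auto
  qed
  have nn: "0 \<le> a k * I k \<and> a k * I k \<le> a k" if "k < N" for k
  proof -
    have "a k > 0" "I k = 0 \<or> I k = 1" using pos I01 that by auto
    then show ?thesis by auto
  qed
  obtain i0 where i0: "i0 < N" "I i0 = 1" using ex by auto
  have Spos: "S > 0"
  proof -
    have "S \<ge> a i0 * I i0" unfolding S_def
      using nn i0 by (intro member_le_sum) auto
    then show ?thesis using pos i0 by auto
  qed
  have "S \<le> (\<Sum>k<N. a k)" unfolding S_def
    using nn by (intro sum_mono) auto
  then have Sle: "S \<le> 1" using s1 by simp
  have E: "\<bar>a i - a i * I i / S\<bar> = a i * (1 - I i) + a i * I i * (1/S - 1)" if "i < N" for i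
  proof -
    have S1: "1/S \<ge> 1" using Spos Sle by (simp add: field_simps)
    have ap: "a i > 0" using pos that by auto
    have "I i = 0 \<or> I i = 1" using I01 that by auto
    then show ?thesis
    proof
      assume "I i = 0" then show ?thesis using ap by simp
    next
      assume I1: "I i = 1"
      have "a i / S \<ge> a i" using S1 ap
        by (metis mult.right_neutral mult_left_mono less_imp_le times_divide_eq_right)
      then show ?thesis using I1 by (simp add: field_simps)
    qed
  qed
  have "(\<Sum>i<N. \<bar>a i - a i * I i / (\<Sum>k<N. \<bar>a k * I k\<bar>)\<bar>)
      = (\<Sum>i<N. a i * (1 - I i)) + (\<Sum>i<N. a i * I i) * (1/S - 1)"
    unfolding Sabs using E by (simp add: sum.distrib sum_distrib_right)
  also have "(\<Sum>i<N. a i * I i) * (1/S - 1) = 1 - S"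
    using Spos unfolding S_def[symmetric] by (simp add: field_simps)
  also have "1 - S = (\<Sum>i<N. a i * (1 - I i))"
    using s1 unfolding S_def by (simp add: algebra_simps sum_subtractf)
  finally show ?thesis by simp
qed

theorem theorem1:
  fixes H N dh :: nat
    and q :: "nat \<Rightarrow> nat \<Rightarrow> real"
    and K V :: "nat \<Rightarrow> nat \<Rightarrow> nat \<Rightarrow> real"
    and W :: "nat \<Rightarrow> nat \<Rightarrow> real"
    and Imask :: "nat \<Rightarrow> nat \<Rightarrow> real"
  assumes "0 < H" and "0 < N" and "0 < dh"
    and "\<forall>h<H. \<forall>i<N. Imask h i \<in> {0, 1}"
    and "\<forall>h<H. \<exists>i<N. Imask h i = 1"
  shows "(let A = softmax_attn N dh q K;
              Ahat = masked_attn N A Imask;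
              y = attn_output H N dh A V W;
              yhat = attn_output H N dh Ahat V W
          in (\<Sum>c<H*dh. \<bar>y c - yhat c\<bar>)
             \<le> 2 * norm1_transpose (H*dh) W *
               (\<Sum>h<H. \<Sum>i<N. A h i * Vbar N dh V h * (1 - Imask h i)))"
proof -
  define A where "A = softmax_attn N dh q K"
  define Ah where "Ah = masked_attn N A Imask"
  define C where "C = norm1_transpose (H*dh) W"
  define E where "E h i = \<bar>A h i - Ah h i\<bar>" for h i
  define D where "D c = cat_heads N dh A V c - cat_heads N dh Ah V c" for c
  have Apos: "A h i > 0" for h i
  proof -
    have "(\<Sum>k<N. exp ((\<Sum>j<dh. q h j * K h k j) / sqrt (real dh))) > 0"
      using assms(2) by (intro sum_pos) auto
    then show ?thesis unfolding A_def softmax_attn_def by simp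
  qed
  have Asum: "(\<Sum>i<N. A h i) = 1" for h
  proof -
    have "(\<Sum>k<N. exp ((\<Sum>j<dh. q h j * K h k j) / sqrt (real dh))) > 0"
      using assms(2) by (intro sum_pos) auto
    then show ?thesis unfolding A_def softmax_attn_def
      by (simp add: sum_divide_distrib[symmetric])
  qed
  have Esum: "(\<Sum>i<N. E h i) = 2 * (\<Sum>i<N. A h i * (1 - Imask h i))" if "h < H" for h
    unfolding E_def Ah_def masked_attn_def
    using head_l1[of N "A h" "Imask h"] Apos Asum assms(4,5) that by auto
  have step1: "\<bar>attn_output H N dh A V W c' - attn_output H N dh Ah V W c'\<bar>
      \<le> (\<Sum>c<H*dh. \<bar>D c\<bar> * \<bar>W c c'\<bar>)" for c'
  proof -
    have "\<bar>attn_output H N dh A V W c' - attn_output H N dh Ah V W c'\<bar> = \<bar>\<Sum>c<H*dh. D c * W c c'\<bar>"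
      unfolding attn_output_def D_def by (simp add: sum_subtractf left_diff_distrib)
    also have "\<dots> \<le> (\<Sum>c<H*dh. \<bar>D c * W c c'\<bar>)" by (rule sum_abs)
    finally show ?thesis by (simp add: abs_mult)
  qed
  have rowle: "(\<Sum>c'<H*dh. \<bar>W c c'\<bar>) \<le> C" if "c < H*dh" for c
    unfolding C_def norm1_transpose_def using that by (intro Max_ge) auto
  have step2: "(\<Sum>c'<H*dh. \<bar>attn_output H N dh A V W c' - attn_output H N dh Ah V W c'\<bar>)
      \<le> C * (\<Sum>c<H*dh. \<bar>D c\<bar>)"
  proof -
    have "(\<Sum>c'<H*dh. \<bar>attn_output H N dh A V W c' - attn_output H N dh Ah V W c'\<bar>)
        \<le> (\<Sum>c'<H*dh. \<Sum>c<H*dh. \<bar>D c\<bar> * \<bar>W c c'\<bar>)"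
      by (intro sum_mono step1)
    also have "\<dots> = (\<Sum>c<H*dh. \<bar>D c\<bar> * (\<Sum>c'<H*dh. \<bar>W c c'\<bar>))"
      by (subst sum.swap) (simp add: sum_distrib_left)
    also have "\<dots> \<le> (\<Sum>c<H*dh. \<bar>D c\<bar> * C)"
      by (intro sum_mono mult_left_mono rowle) auto
    finally show ?thesis by (simp add: sum_distrib_left mult.commute)
  qed
  have step3: "\<bar>D c\<bar> \<le> (\<Sum>i<N. E (c div dh) i * \<bar>V (c div dh) i (c mod dh)\<bar>)" for c
  proof -
    have "\<bar>D c\<bar> = \<bar>\<Sum>i<N. (A (c div dh) i - Ah (c div dh) i) * V (c div dh) i (c mod dh)\<bar>"
      unfolding D_def cat_heads_def by (simp add: sum_subtractf left_diff_distrib)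
    also have "\<dots> \<le> (\<Sum>i<N. \<bar>(A (c div dh) i - Ah (c div dh) i) * V (c div dh) i (c mod dh)\<bar>)"
      by (rule sum_abs)
    finally show ?thesis by (simp add: E_def abs_mult)
  qed
  have Vle: "(\<Sum>j<dh. \<bar>V h i j\<bar>) \<le> Vbar N dh V h" if "i < N" for h i
    unfolding Vbar_def using that by (intro Max_ge) auto
  have step4: "(\<Sum>c<H*dh. \<bar>D c\<bar>) \<le> (\<Sum>h<H. Vbar N dh V h * (\<Sum>i<N. E h i))"
  proof -
    have "(\<Sum>c<H*dh. \<bar>D c\<bar>) \<le> (\<Sum>c<H*dh. \<Sum>i<N. E (c div dh) i * \<bar>V (c div dh) i (c mod dh)\<bar>)"
      by (intro sum_mono step3)
    also have "\<dots> = (\<Sum>h<H. \<Sum>j<dh. \<Sum>i<N. E h i * \<bar>V h i j\<bar>)"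
      using sum_div_mod_reindex[OF assms(3), where H=H and f="\<lambda>h j. \<Sum>i<N. E h i * \<bar>V h i j\<bar>"] by simp
    also have "\<dots> = (\<Sum>h<H. \<Sum>i<N. E h i * (\<Sum>j<dh. \<bar>V h i j\<bar>))"
      by (rule sum.cong[OF refl], subst sum.swap, simp add: sum_distrib_left)
    also have "\<dots> \<le> (\<Sum>h<H. \<Sum>i<N. E h i * Vbar N dh V h)"
      by (intro sum_mono mult_left_mono Vle) (auto simp: E_def)
    finally show ?thesis by (simp add: sum_distrib_left mult.commute)
  qed
  have Cnn: "C \<ge> 0"
  proof -
    have "0 < H*dh" using assms by simp
    then have "(\<Sum>c'<H*dh. \<bar>W 0 c'\<bar>) \<le> C" by (intro rowle)
    moreover have "0 \<le> (\<Sum>c'<H*dh. \<bar>W 0 c'\<bar>)" by (intro sum_nonneg) auto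
    ultimately show ?thesis by linarith
  qed
  have "(\<Sum>c'<H*dh. \<bar>attn_output H N dh A V W c' - attn_output H N dh Ah V W c'\<bar>)
      \<le> C * (\<Sum>h<H. Vbar N dh V h * (\<Sum>i<N. E h i))"
    using step2 step4 Cnn by (meson mult_left_mono order_trans)
  also have "C * (\<Sum>h<H. Vbar N dh V h * (\<Sum>i<N. E h i))
      = C * (\<Sum>h<H. Vbar N dh V h * (2 * (\<Sum>i<N. A h i * (1 - Imask h i))))"
    by (intro arg_cong[where f="\<lambda>x. C * x"] sum.cong refl) (simp add: Esum)
  also have "\<dots> = 2 * C * (\<Sum>h<H. \<Sum>i<N. A h i * Vbar N dh V h * (1 - Imask h i))"
    by (simp add: sum_distrib_left sum_distrib_right mult_ac)
  finally show ?thesis unfolding Let_def A_def[symmetric] Ah_def[symmetric] C_def[symmetric] .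
qed

end
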